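(* Let $d\ge3$ and $\beta>0$ with $\mu(\beta)<1/\rho_d$. There exists a nondecreasing continuous function $C:[0,\infty)\to(0,\infty)$, depending only on $\beta,d,\sigma,g$, such that for all integers $1\le s<t$, all $x\in\mathbb{Z}^d$ and all $\varepsilon\in(0,1)$, almost surely \[ |\mathbb{E}'(W_\varepsilon(s,t,x))-G_\varepsilon(s,x)|\le C(\Sigma)\,\varepsilon(t-s), \] where $\Sigma=\varepsilon|x|+\varepsilon(t-s)+\varepsilon\sqrt t+\varepsilon^2t$.
   Context: $\xi=(\xi_{u,y})_{u\in\mathbb{Z}_{\ge1},y\in\mathbb{Z}^d}$ are i.i.d. with common law $\sigma$, the push-forward of the standard Gaussian measure under some Lipschitz map; $m(\beta)=\mathbb{E}(e^{\beta\xi_{u,y}})$, $\mu(\beta)=m(2\beta)/m(\beta)^2$, $\rho_d$ the return probability of simple symmetric random walk on $\mathbb{Z}^d$. $g:\mathbb{R}^d\to\mathbb{R}$ is Lipschitz, $g_\varepsilon(x)=g(\varepsilon x)$. For integers $0\le s<t$ and $x\in\mathbb{Z}^d$, $\mathcal{Q}(s,t,x)$ is the set of nearest-neighbour paths $(q_s,\dots,q_t)$ in $\mathbb{Z}^d$ with $q_t=x$, and $\mathcal{Q}(t,x)=\mathcal{Q}(0,t,x)$. $Y(s,t,x)=(2d)^{-(t-s)}\sum_{q\in\mathcal{Q}(s,t,x)}\exp(\beta\sum_{i=s+1}^t\xi_{i,q_i})/m(\beta)^{t-s}$; $Z_\varepsilon(t,x)=(2d)^{-t}\sum_{q\in\mathcal{Q}(t,x)}e^{\beta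 g_\varepsilon(q_0)}\exp(\beta\sum_{i=1}^t\xi_{i,q_i})/m(\beta)^t$; $W_\varepsilon(s,t,x)=Z_\varepsilon(t,x)/Y(s,t,x)$. $G_\varepsilon(s,x)=\mathbb{E}(e^{\beta g_\varepsilon(S_s+x)})$ with $\{S_n\}$ simple symmetric random walk on $\mathbb{Z}^d$ from the origin. $\mathbb{E}'$ denotes conditional expectation given the $\sigma$-algebra generated by $\{\xi_{u,y}:s+1\le u\le t,\ y\in\mathbb{Z}^d\}$. *)

theory Defs
  imports "HOL-Probability.Probability"
begin

definition nbr :: "int^'d \<Rightarrow> int^'d \<Rightarrow> bool" where
  "nbr a b \<longleftrightarrow> (\<exists>k. b = a + axis k 1 \<or> b = a - axis k 1)"

text \<open>Q(s,t,x): nearest-neighbour paths (q_s,...,q_t) with q_t = x,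
  represented extensionally (q i = 0 outside [s,t]).\<close>
definition paths :: "nat \<Rightarrow> nat \<Rightarrow> int^'d \<Rightarrow> (nat \<Rightarrow> int^'d) set" where
  "paths s t x = {q. (\<forall>i. i < s \<or> t < i \<longrightarrow> q i = 0)
                   \<and> (\<forall>i. s \<le> i \<and> i < t \<longrightarrow> nbr (q i) (q (Suc i))) \<and> q t = x}"

definition walks0 :: "nat \<Rightarrow> (nat \<Rightarrow> int^'d) set" where
  "walks0 n = {q. q 0 = 0 \<and> (\<forall>i. n < i \<longrightarrow> q i = 0)
                  \<and> (\<forall>i. i < n \<longrightarrow> nbr (q i) (q (Suc i)))}"

text \<open>Return probability of simple symmetric random walk: sum over n \<ge> 1 of the
  probability (2d)^(-n) * #(paths) of first return to 0 at time n.\<close>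
definition rho :: "'d::finite itself \<Rightarrow> real" where
  "rho _ = (\<Sum>n. real (card {q :: nat \<Rightarrow> int^'d. q \<in> walks0 (Suc n) \<and> q (Suc n) = 0
                  \<and> (\<forall>k. 0 < k \<and> k < Suc n \<longrightarrow> q k \<noteq> 0)})
             / (2 * real CARD('d)) ^ Suc n)"

text \<open>Standard Gaussian measure and sigma = push-forward under phi.\<close>
definition std_gauss :: "real measure" where
  "std_gauss = density lborel std_normal_density"

definition mgf :: "(real \<Rightarrow> real) \<Rightarrow> real \<Rightarrow> real" where
  "mgf \<phi> \<beta> = (\<integral>z. exp (\<beta> * \<phi> z) \<partial>std_gauss)"

definition mu :: "(real \<Rightarrow> real) \<Rightarrow> real \<Rightarrow> real" where
  "mu \<phi> \<beta> = mgf \<phi> (2 * \<beta>) / (mgf \<phi> \<beta>)\<^sup>2"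

definition iid_field :: "'a measure \<Rightarrow> (real \<Rightarrow> real) \<Rightarrow> (nat \<Rightarrow> int^'d \<Rightarrow> 'a \<Rightarrow> real) \<Rightarrow> bool" where
  "iid_field M \<phi> \<xi> \<longleftrightarrow> prob_space M
     \<and> prob_space.indep_vars M (\<lambda>_. borel) (\<lambda>(u, y). \<xi> u y) ({1..} \<times> UNIV)
     \<and> (\<forall>u\<ge>1. \<forall>y. distr M borel (\<xi> u y) = distr std_gauss borel \<phi>)"

definition rvec :: "int^'d \<Rightarrow> real^'d" where
  "rvec x = (\<chi> i. real_of_int (x $ i))"

definition Yfun :: "(real \<Rightarrow> real) \<Rightarrow> real \<Rightarrow> (nat \<Rightarrow> int^'d \<Rightarrow> 'a \<Rightarrow> real)
     \<Rightarrow> nat \<Rightarrow> nat \<Rightarrow> int^'d \<Rightarrow> 'a \<Rightarrow> real" where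
  "Yfun \<phi> \<beta> \<xi> s t x \<omega> = (\<Sum>q\<in>paths s t x. exp (\<beta> * (\<Sum>i\<in>{Suc s..t}. \<xi> i (q i) \<omega>)))
       / ((2 * real CARD('d)) ^ (t - s) * mgf \<phi> \<beta> ^ (t - s))"

definition Zfun :: "(real \<Rightarrow> real) \<Rightarrow> real \<Rightarrow> (real^'d \<Rightarrow> real) \<Rightarrow> real
     \<Rightarrow> (nat \<Rightarrow> int^'d \<Rightarrow> 'a \<Rightarrow> real) \<Rightarrow> nat \<Rightarrow> int^'d \<Rightarrow> 'a \<Rightarrow> real" where
  "Zfun \<phi> \<beta> g \<epsilon> \<xi> t x \<omega> = (\<Sum>q\<in>paths 0 t x. exp (\<beta> * g (\<epsilon> *\<^sub>R rvec (q 0)))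
          * exp (\<beta> * (\<Sum>i\<in>{1..t}. \<xi> i (q i) \<omega>)))
       / ((2 * real CARD('d)) ^ t * mgf \<phi> \<beta> ^ t)"

definition Wfun :: "(real \<Rightarrow> real) \<Rightarrow> real \<Rightarrow> (real^'d \<Rightarrow> real) \<Rightarrow> real
     \<Rightarrow> (nat \<Rightarrow> int^'d \<Rightarrow> 'a \<Rightarrow> real) \<Rightarrow> nat \<Rightarrow> nat \<Rightarrow> int^'d \<Rightarrow> 'a \<Rightarrow> real" where
  "Wfun \<phi> \<beta> g \<epsilon> \<xi> s t x \<omega> = Zfun \<phi> \<beta> g \<epsilon> \<xi> t x \<omega> / Yfun \<phi> \<beta> \<xi> s t x \<omega>"

definition Gfun :: "real \<Rightarrow> (real^'d \<Rightarrow> real) \<Rightarrow> real \<Rightarrow> nat \<Rightarrow> int^'d \<Rightarrow> real" where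
  "Gfun \<beta> g \<epsilon> s x = (\<Sum>q\<in>walks0 s. exp (\<beta> * g (\<epsilon> *\<^sub>R rvec (q s + x))))
       / (2 * real CARD('d)) ^ s"

definition Fsig :: "'a measure \<Rightarrow> (nat \<Rightarrow> int^'d \<Rightarrow> 'a \<Rightarrow> real) \<Rightarrow> nat \<Rightarrow> nat \<Rightarrow> 'a measure" where
  "Fsig M \<xi> s t = sigma (space M)
     {\<xi> u y -` A \<inter> space M | u y A. Suc s \<le> u \<and> u \<le> t \<and> A \<in> sets borel}"

end

theory Submission
  imports Defs "HOL-Probability.Hoeffding"
begin

definition dirs :: "(int^'d) set" where
  "dirs = range (\<lambda>k. axis k 1) \<union> range (\<lambda>k. - axis k 1)"

lemma nbr_iff: "nbr a b \<longleftrightarrow> b - a \<in> dirs"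
  unfolding nbr_def dirs_def by (auto simp: algebra_simps)

lemma finite_dirs: "finite (dirs :: (int^'d::finite) set)"
  unfolding dirs_def by auto

lemma nbr_sym: "nbr a b \<Longrightarrow> nbr b a"
  unfolding nbr_def by (auto simp: algebra_simps)

lemma nbr_transl: "nbr (a - x) (b - x) \<longleftrightarrow> nbr a b"
  unfolding nbr_iff by (simp add: algebra_simps)

lemma nbr_transl': "nbr (a + x) (b + x) \<longleftrightarrow> nbr a b"
  unfolding nbr_iff by (simp add: algebra_simps)

lemma walks0_0: "walks0 0 = {\<lambda>_. 0}"
  unfolding walks0_def
  by (auto simp: fun_eq_iff) (metis neq0_conv)

lemma walks0_Suc: "walks0 (Suc n) = (\<lambda>(w,e). w(Suc n := w n + e)) ` (walks0 n \<times> (dirs :: (int^'d::finite) set))"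
proof (intro set_eqI iffI)
  fix q assume q: "q \<in> walks0 (Suc n)"
  let ?w = "q(Suc n := 0)" and ?e = "q (Suc n) - q n"
  have h1: "?w \<in> walks0 n" using q unfolding walks0_def
    by (auto simp: less_Suc_eq)
  have h2: "?e \<in> dirs" using q unfolding walks0_def by (auto simp: nbr_iff)
  have eq: "q = (\<lambda>(w,e). w(Suc n := w n + e)) (?w, ?e)" by (auto simp: fun_eq_iff)
  show "q \<in> (\<lambda>(w,e). w(Suc n := w n + e)) ` (walks0 n \<times> dirs)"
    by (rule image_eqI[where x="(?w,?e)"], rule eq) (use h1 h2 in auto)
next
  fix q assume "q \<in> (\<lambda>(w,e). w(Suc n := w n + e)) ` (walks0 n \<times> dirs)"
  then obtain w e where q: "q = w(Suc n := w n + e)" and w: "w \<in> walks0 n" and e: "e \<in> dirs" by auto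
  show "q \<in> walks0 (Suc n)" using w e unfolding q walks0_def
    by (auto simp: less_Suc_eq nbr_iff)
qed

lemma inj_walks0_Suc: "inj_on (\<lambda>(w,e). w(Suc n := w n + e)) (walks0 n \<times> (dirs :: (int^'d::finite) set))"
proof (rule inj_onI, clarify)
  fix w e w' e'
  assume w: "w \<in> walks0 n" and w': "w' \<in> walks0 n"
    and eq: "w(Suc n := w n + e) = w'(Suc n := w' n + e')"
  have "w (Suc n) = 0" "w' (Suc n) = 0" using w w' unfolding walks0_def by auto
  moreover have "w i = w' i" if "i \<noteq> Suc n" for i
    using fun_cong[OF eq, of i] that by simp
  ultimately have ww: "w = w'" by (metis ext)
  then show "w = w' \<and> e = e'" using fun_cong[OF eq, of "Suc n"] by simp
qed

lemma finite_walks0: "finite (walks0 n :: (nat \<Rightarrow> int^'d::finite) set)"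
  by (induction n) (auto simp: walks0_0 walks0_Suc finite_dirs)

lemma sum_walks0_Suc:
  "(\<Sum>w\<in>walks0 (Suc n). F w) = (\<Sum>w\<in>walks0 n. \<Sum>e\<in>dirs. F (w(Suc n := w n + e)))"
  unfolding walks0_Suc by (subst sum.reindex[OF inj_walks0_Suc]) (simp add: sum.cartesian_product split_def)

lemma sum_dirs:
  "(\<Sum>e\<in>(dirs :: (int^'d::finite) set). h e) = (\<Sum>k\<in>UNIV. h (axis k 1)) + (\<Sum>k\<in>UNIV. h (- axis k 1))"
proof -
  have inj1: "inj (\<lambda>k::'d. axis k (1::int))" by (auto intro!: injI simp: axis_eq_axis)
  have inj2: "inj (\<lambda>k::'d. - axis k (1::int))" by (auto intro!: injI simp: axis_eq_axis)
  have disj: "range (\<lambda>k::'d. axis k (1::int)) \<inter> range (\<lambda>k. - axis k 1) = {}"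
  proof (safe)
    fix k j :: 'd assume "axis k (1::int) = - axis j 1"
    then have "axis k (1::int) $ k = (- axis j 1) $ k" by simp
    then show "axis k (1::int) \<in> {}" by (auto simp: axis_def split: if_splits)
  qed
  show ?thesis unfolding dirs_def
    by (subst sum.union_disjoint) (auto simp: disj sum.reindex inj1 inj2)
qed

lemma sum_dirs_exp:
  "(\<Sum>e\<in>(dirs :: (int^'d::finite) set). exp (\<mu> * real_of_int (e $ j)))
     = 2 * (real CARD('d) - 1) + exp \<mu> + exp (-\<mu>)"
proof -
  have a: "(\<Sum>k\<in>(UNIV::'d set). exp (\<mu> * real_of_int (axis k (1::int) $ j))) = real CARD('d) - 1 + exp \<mu>"
  proof -
    have "(\<Sum>k\<in>(UNIV::'d set). exp (\<mu> * real_of_int (axis k (1::int) $ j)))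
        = (\<Sum>k\<in>(UNIV::'d set). 1 + (if k = j then exp \<mu> - 1 else 0))"
      by (intro sum.cong) (auto simp: axis_def)
    also have "\<dots> = real CARD('d) + (exp \<mu> - 1)"
      by (simp add: sum.distrib)
    finally show ?thesis by simp
  qed
  have b: "(\<Sum>k\<in>(UNIV::'d set). exp (\<mu> * real_of_int ((- axis k (1::int)) $ j))) = real CARD('d) - 1 + exp (-\<mu>)"
  proof -
    have "(\<Sum>k\<in>(UNIV::'d set). exp (\<mu> * real_of_int ((- axis k (1::int)) $ j)))
        = (\<Sum>k\<in>(UNIV::'d set). 1 + (if k = j then exp (-\<mu>) - 1 else 0))"
      by (intro sum.cong) (auto simp: axis_def)
    also have "\<dots> = real CARD('d) + (exp (-\<mu>) - 1)"
      by (simp add: sum.distrib)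
    finally show ?thesis by simp
  qed
  show ?thesis using a b by (simp add: sum_dirs)
qed

lemma walk_exp_sum:
  "(\<Sum>w\<in>(walks0 n :: (nat \<Rightarrow> int^'d::finite) set). exp (\<mu> * real_of_int (w n $ j)))
     = (2 * (real CARD('d) - 1) + exp \<mu> + exp (-\<mu>)) ^ n"
proof (induction n)
  case 0
  then show ?case by (simp add: walks0_0)
next
  case (Suc n)
  have "(\<Sum>w\<in>(walks0 (Suc n) :: (nat \<Rightarrow> int^'d::finite) set). exp (\<mu> * real_of_int (w (Suc n) $ j)))
     = (\<Sum>w\<in>(walks0 n :: (nat \<Rightarrow> int^'d::finite) set). \<Sum>e\<in>dirs. exp (\<mu> * real_of_int (w n $ j)) * exp (\<mu> * real_of_int (e $ j)))"
    by (simp add: sum_walks0_Suc distrib_left exp_add)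
  also have "\<dots> = (\<Sum>w\<in>(walks0 n :: (nat \<Rightarrow> int^'d::finite) set). exp (\<mu> * real_of_int (w n $ j))) *
       (2 * (real CARD('d) - 1) + exp \<mu> + exp (-\<mu>))"
    by (simp add: sum_distrib_left[symmetric] sum_distrib_right sum_dirs_exp)
  finally show ?case using Suc by simp
qed

lemma walks0_nonempty: "walks0 n \<noteq> ({} :: (nat \<Rightarrow> int^'d::finite) set)"
proof -
  obtain k :: 'd where True by simp
  let ?w = "\<lambda>i. if i \<le> n \<and> odd i then axis k (1::int) else 0"
  have "?w \<in> walks0 n" unfolding walks0_def nbr_def
    by (auto intro!: exI[of _ k])
  then show ?thesis by blast
qed

lemma paths_rev_bij:
  fixes x :: "int^'d::finite"
  assumes "s \<le> t"
  shows "bij_betw (\<lambda>q i. if i \<le> t - s then q (t - i) - x else 0) (paths s t x) (walks0 (t - s))"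
proof (rule bij_betw_byWitness[where f'="\<lambda>w i. if s \<le> i \<and> i \<le> t then w (t - i) + x else 0"])
  show "\<forall>q\<in>paths s t x. (\<lambda>i. if s \<le> i \<and> i \<le> t then (if t - i \<le> t - s then q (t - (t - i)) - x else 0) + x else 0) = q"
    using assms by (auto simp: paths_def fun_eq_iff)
  show "\<forall>w\<in>walks0 (t - s). (\<lambda>i. if i \<le> t - s then (if s \<le> t - i \<and> t - i \<le> t then w (t - (t - i)) + x else 0) - x else 0) = w"
    using assms by (auto simp: walks0_def fun_eq_iff)
  show "(\<lambda>q i. if i \<le> t - s then q (t - i) - x else 0) ` paths s t x \<subseteq> walks0 (t - s)"
  proof clarify
    fix q assume q: "q \<in> paths s t x"
    have "nbr (q (t - i) - x) (q (t - Suc i) - x)" if "i < t - s" for i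
    proof -
      have "nbr (q (t - Suc i)) (q (Suc (t - Suc i)))" using q that unfolding paths_def by auto
      moreover have "Suc (t - Suc i) = t - i" using that by simp
      ultimately show ?thesis by (simp add: nbr_transl nbr_sym)
    qed
    then show "(\<lambda>i. if i \<le> t - s then q (t - i) - x else 0) \<in> walks0 (t - s)"
      using q unfolding walks0_def paths_def by auto
  qed
  show "(\<lambda>w i. if s \<le> i \<and> i \<le> t then w (t - i) + x else 0) ` walks0 (t - s) \<subseteq> paths s t x"
  proof clarify
    fix w :: "nat \<Rightarrow> int^'d" assume w: "w \<in> walks0 (t - s)"
    have "nbr (w (t - i) + x) (w (t - Suc i) + x)" if "s \<le> i" "i < t" for i
    proof -
      have "nbr (w (t - Suc i)) (w (Suc (t - Suc i)))" using w that unfolding walks0_def by auto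
      moreover have "Suc (t - Suc i) = t - i" using that by simp
      ultimately show ?thesis by (simp add: nbr_transl' nbr_sym)
    qed
    then show "(\<lambda>i. if s \<le> i \<and> i \<le> t then w (t - i) + x else 0) \<in> paths s t x"
      using w assms unfolding walks0_def paths_def by auto
  qed
qed

lemma finite_paths: "s \<le> t \<Longrightarrow> finite (paths s t (x::int^'d::finite))"
  using bij_betw_finite[OF paths_rev_bij] finite_walks0 by blast

lemma paths_nonempty: "s \<le> t \<Longrightarrow> paths s t (x::int^'d::finite) \<noteq> {}"
  using bij_betw_imp_surj_on[OF paths_rev_bij, of s t x] walks0_nonempty[of "t - s"] by auto

lemma sum_paths_start:
  "(\<Sum>q\<in>paths 0 s (y::int^'d::finite). f (q 0)) = (\<Sum>w\<in>walks0 s. f (w s + y))"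
proof -
  have "(\<Sum>w\<in>walks0 s. f (w s + y)) = (\<Sum>q\<in>paths 0 s y. f ((\<lambda>i. if i \<le> s - 0 then q (s - i) - y else 0) s + y))"
    using sum.reindex_bij_betw[OF paths_rev_bij[of 0 s y], of "\<lambda>w. f (w s + y)"] by simp
  also have "\<dots> = (\<Sum>q\<in>paths 0 s y. f (q 0))" by simp
  finally show ?thesis by simp
qed

lemma rvec_add: "rvec (a + b) = rvec a + rvec b"
  by (simp add: rvec_def vec_eq_iff)
lemma rvec_diff: "rvec (a - b) = rvec a - rvec b"
  by (simp add: rvec_def vec_eq_iff)
lemma rvec_0: "rvec 0 = 0"
  by (simp add: rvec_def vec_eq_iff)

lemma norm_rvec_dir: "e \<in> dirs \<Longrightarrow> norm (rvec e) = 1"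
proof -
  have "rvec (axis k (1::int)) = axis k (1::real)" for k :: 'a
    by (simp add: rvec_def vec_eq_iff axis_def)
  moreover have "rvec (- axis k (1::int)) = - axis k (1::real)" for k :: 'a
    by (simp add: rvec_def vec_eq_iff axis_def)
  ultimately show "e \<in> dirs \<Longrightarrow> norm (rvec e) = 1" unfolding dirs_def by auto
qed

lemma walk_norm: "w \<in> walks0 n \<Longrightarrow> i \<le> n \<Longrightarrow> norm (rvec (w i)) \<le> real i"
proof (induction i)
  case 0
  then show ?case by (simp add: walks0_def rvec_0)
next
  case (Suc i)
  then have "w (Suc i) - w i \<in> dirs" by (simp add: walks0_def nbr_iff)
  then have "norm (rvec (w (Suc i)) - rvec (w i)) = 1" by (metis norm_rvec_dir rvec_diff)
  moreover have "norm (rvec (w i)) \<le> real i" using Suc by simp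
  ultimately show ?case using norm_triangle_ineq2[of "rvec (w (Suc i))" "rvec (w i)"] by simp
qed

lemma paths_dist:
  assumes "s \<le> t" "r \<in> paths s t x"
  shows "norm (rvec (r s) - rvec x) \<le> real (t - s)"
proof -
  have "(\<lambda>i. if i \<le> t - s then r (t - i) - x else 0) \<in> walks0 (t - s)"
    using bij_betw_imp_surj_on[OF paths_rev_bij[OF assms(1)]] assms(2) by blast
  from walk_norm[OF this, of "t - s"] assms(1) show ?thesis by (simp add: rvec_diff)
qed

lemma paths_split_bij:
  fixes x :: "int^'d::finite"
  assumes "s \<le> t"
  shows "bij_betw (\<lambda>q. ((\<lambda>i. if s \<le> i \<and> i \<le> t then q i else 0), (\<lambda>i. if i \<le> s then q i else 0)))
     (paths 0 t x) (SIGMA r:paths s t x. paths 0 s (r s))"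
proof (rule bij_betw_byWitness[where f'="\<lambda>(r,p) i. if i \<le> s then p i else r i"])
  show "\<forall>q\<in>paths 0 t x. (\<lambda>(r, p) i. if i \<le> s then p i else r i)
      ((\<lambda>i. if s \<le> i \<and> i \<le> t then q i else 0), (\<lambda>i. if i \<le> s then q i else 0)) = q"
    using assms by (auto simp: paths_def fun_eq_iff)
  show "\<forall>rp\<in>(SIGMA r:paths s t x. paths 0 s (r s)). (\<lambda>q. ((\<lambda>i. if s \<le> i \<and> i \<le> t then q i else 0), (\<lambda>i. if i \<le> s then q i else 0)))
      ((\<lambda>(r, p) i. if i \<le> s then p i else r i) rp) = rp"
    using assms by (auto simp: paths_def fun_eq_iff)
  show "(\<lambda>q. ((\<lambda>i. if s \<le> i \<and> i \<le> t then q i else 0), (\<lambda>i. if i \<le> s then q i else 0))) ` paths 0 t x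
      \<subseteq> (SIGMA r:paths s t x. paths 0 s (r s))"
    using assms by (auto simp: paths_def)
  show "(\<lambda>(r, p) i. if i \<le> s then p i else r i) ` (SIGMA r:paths s t x. paths 0 s (r s)) \<subseteq> paths 0 t x"
  proof clarify
    fix r p assume r: "r \<in> paths s t x" and p: "p \<in> paths 0 s (r s)"
    show "(\<lambda>i. if i \<le> s then p i else r i) \<in> paths 0 t x"
      using r p assms unfolding paths_def
      apply (auto simp: not_le)
      apply (metis le_SucE le_less_Suc_eq less_eq_Suc_le not_less_eq_eq)
      done
  qed
qed

lemma cosh_bound: "exp (\<mu>::real) + exp (-\<mu>) \<le> 2 * exp (\<mu>\<^sup>2 / 2)"
proof -
  define h where "h = 2 * \<bar>\<mu>\<bar>"
  have "- h * (1/2) + ln (1 + (1/2) * (exp h - 1)) \<le> h\<^sup>2 / 8"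
    using Hoeffdings_lemma_aux[of h "1/2"] by (simp add: h_def)
  moreover have e: "1 + (1/2) * (exp h - 1) = (1 + exp h) / 2" by (simp add: field_simps)
  ultimately have A: "- h * (1/2) + ln ((1 + exp h) / 2) \<le> h\<^sup>2 / 8" by metis
  have hsq: "h\<^sup>2 = 4 * \<mu>\<^sup>2" by (simp add: h_def power_mult_distrib)
  have hh: "h * (1/2) = \<bar>\<mu>\<bar>" by (simp add: h_def)
  from A hsq hh have "ln ((1 + exp h) / 2) \<le> \<bar>\<mu>\<bar> + \<mu>\<^sup>2 / 2"
    by linarith
  then have "(1 + exp h) / 2 \<le> exp (\<bar>\<mu>\<bar> + \<mu>\<^sup>2 / 2)"
    by (metis exp_le_cancel_iff exp_ln add_pos_nonneg divide_pos_pos exp_ge_zero zero_less_one zero_less_numeral)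
  then have "(1 + exp h) / 2 * exp (-\<bar>\<mu>\<bar>) \<le> exp (\<bar>\<mu>\<bar> + \<mu>\<^sup>2 / 2) * exp (-\<bar>\<mu>\<bar>)"
    by (simp add: mult_right_mono)
  also have "\<dots> = exp (\<mu>\<^sup>2 / 2)" by (simp flip: exp_add)
  also have "(1 + exp h) / 2 * exp (-\<bar>\<mu>\<bar>) = (exp (-\<bar>\<mu>\<bar>) + exp \<bar>\<mu>\<bar>) / 2"
    by (simp add: h_def field_simps flip: exp_add)
  finally have "exp (-\<bar>\<mu>\<bar>) + exp \<bar>\<mu>\<bar> \<le> 2 * exp (\<mu>\<^sup>2 / 2)" by simp
  then show ?thesis by (cases "\<mu> \<ge> 0") auto
qed

lemma D_bound: "2 * (real CARD('d::finite) - 1) + exp \<mu> + exp (-\<mu>) \<le> 2 * real CARD('d) * exp (\<mu>\<^sup>2 / 2)"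
proof -
  have "1 \<le> exp (\<mu>\<^sup>2 / 2)" by simp
  moreover have "real CARD('d) \<ge> 1" by (simp add: Suc_le_eq)
  ultimately have "2 * (real CARD('d) - 1) * 1 \<le> 2 * (real CARD('d) - 1) * exp (\<mu>\<^sup>2 / 2)"
    by (intro mult_left_mono) auto
  then show ?thesis using cosh_bound[of \<mu>] by (simp add: algebra_simps)
qed

lemma exp_norm_le:
  fixes v :: "real^'d::finite"
  assumes "0 \<le> lam"
  shows "exp (lam * norm v) \<le> (\<Sum>k\<in>UNIV. exp (real CARD('d) * lam * v $ k) + exp (- (real CARD('d) * lam) * v $ k))"
proof -
  have "Max (range (\<lambda>k. \<bar>v $ k\<bar>)) \<in> range (\<lambda>k. \<bar>v $ k\<bar>)" by (rule Max_in) auto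
  then obtain k0 where k0e: "\<bar>v $ k0\<bar> = Max (range (\<lambda>k. \<bar>v $ k\<bar>))" by (metis (mono_tags) rangeE)
  have k0: "\<bar>v $ k\<bar> \<le> \<bar>v $ k0\<bar>" for k unfolding k0e by (rule Max_ge) auto
  have "norm v \<le> (\<Sum>k\<in>UNIV. \<bar>v $ k\<bar>)" by (rule norm_le_l1_cart)
  also have "\<dots> \<le> (\<Sum>k\<in>(UNIV::'d set). \<bar>v $ k0\<bar>)" by (intro sum_mono k0)
  also have "\<dots> = real CARD('d) * \<bar>v $ k0\<bar>" by simp
  finally have "exp (lam * norm v) \<le> exp (lam * (real CARD('d) * \<bar>v $ k0\<bar>))"
    using assms by (simp add: mult_left_mono)
  also have "\<dots> \<le> exp (real CARD('d) * lam * v $ k0) + exp (- (real CARD('d) * lam) * v $ k0)"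
    by (cases "v $ k0 \<ge> 0") (auto simp: algebra_simps)
  also have "\<dots> \<le> (\<Sum>k\<in>UNIV. exp (real CARD('d) * lam * v $ k) + exp (- (real CARD('d) * lam) * v $ k))"
    by (rule member_le_sum) (auto intro: add_nonneg_nonneg)
  finally show ?thesis .
qed

lemma walk_abs_exp:
  assumes "0 \<le> lam"
  shows "(\<Sum>w\<in>(walks0 n :: (nat \<Rightarrow> int^'d::finite) set). exp (lam * norm (rvec (w n))))
     \<le> 2 * real CARD('d) * (2 * real CARD('d)) ^ n * exp ((real CARD('d) * lam)\<^sup>2 * real n / 2)"
proof -
  define c where "c = real CARD('d) * lam"
  have "(\<Sum>w\<in>(walks0 n :: (nat \<Rightarrow> int^'d::finite) set). exp (lam * norm (rvec (w n))))
     \<le> (\<Sum>w\<in>(walks0 n :: (nat \<Rightarrow> int^'d::finite) set). \<Sum>k\<in>UNIV. exp (c * real_of_int (w n $ k)) + exp ((-c) * real_of_int (w n $ k)))"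
    by (intro sum_mono) (use exp_norm_le[OF assms, of "rvec (w n)" for w] in \<open>simp add: c_def rvec_def\<close>)
  also have "\<dots> = (\<Sum>k\<in>(UNIV::'d set). (2 * (real CARD('d) - 1) + exp c + exp (-c)) ^ n
                 + (2 * (real CARD('d) - 1) + exp (-c) + exp (- (- c))) ^ n)"
    by (subst sum.swap) (simp only: sum.distrib walk_exp_sum)
  also have "\<dots> \<le> (\<Sum>k\<in>(UNIV::'d set). 2 * (2 * real CARD('d) * exp (c\<^sup>2 / 2)) ^ n)"
  proof (intro sum_mono)
    fix k
    have "(2 * (real CARD('d) - 1) + exp c + exp (-c)) ^ n \<le> (2 * real CARD('d) * exp (c\<^sup>2 / 2)) ^ n"
      by (intro power_mono D_bound) (auto intro: add_nonneg_nonneg)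
    then show "(2 * (real CARD('d) - 1) + exp c + exp (-c)) ^ n + (2 * (real CARD('d) - 1) + exp (-c) + exp (- (- c))) ^ n
        \<le> 2 * (2 * real CARD('d) * exp (c\<^sup>2 / 2)) ^ n" by (simp add: add.commute add.left_commute)
  qed
  also have "\<dots> = 2 * real CARD('d) * (2 * real CARD('d)) ^ n * exp (c\<^sup>2 * real n / 2)"
    by (simp add: power_mult_distrib exp_of_nat_mult[symmetric] algebra_simps)
  finally show ?thesis by (simp add: c_def)
qed

lemma exp_diff_bound: "\<bar>exp (a::real) - exp b\<bar> \<le> exp (max a b) * \<bar>a - b\<bar>"
proof -
  have *: "exp v - exp u \<le> exp v * (v - u)" if "u \<le> v" for u v :: real
  proof -
    have "1 + (u - v) \<le> exp (u - v)" by (rule exp_ge_add_one_self)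
    then have "exp v * (1 + (u - v)) \<le> exp v * exp (u - v)" by simp
    also have "\<dots> = exp u" by (simp flip: exp_add)
    finally show ?thesis by (simp add: algebra_simps)
  qed
  show ?thesis
  proof (cases "a \<le> b")
    case True
    then show ?thesis using *[OF True] by (simp add: max_def abs_if)
  next
    case False
    then show ?thesis using *[of b a] by (simp add: max_def abs_if)
  qed
qed

lemma lip_bound: "L-lipschitz_on UNIV g \<Longrightarrow> g z \<le> \<bar>g 0\<bar> + L * norm z"
  using lipschitz_onD[of L UNIV g z 0] by (simp add: dist_norm dist_real_def)

lemma G_term_bound:
  fixes g :: "real^'d::finite \<Rightarrow> real"
  assumes lip: "L-lipschitz_on UNIV g" and "0 \<le> \<beta>" "0 \<le> \<epsilon>" "norm (rvec y - rvec x) \<le> D"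
  shows "\<bar>exp (\<beta> * g (\<epsilon> *\<^sub>R rvec (u + y))) - exp (\<beta> * g (\<epsilon> *\<^sub>R rvec (u + x)))\<bar>
     \<le> (\<beta> * L * exp (\<beta> * \<bar>g 0\<bar>) * exp (\<beta> * L * \<epsilon> * (norm (rvec x) + D)) * \<epsilon> * D) * exp (\<beta> * L * \<epsilon> * norm (rvec u))"
proof -
  have L0: "0 \<le> L" using lipschitz_on_nonneg[OF lip] .
  define a where "a = \<beta> * g (\<epsilon> *\<^sub>R rvec (u + y))"
  define b where "b = \<beta> * g (\<epsilon> *\<^sub>R rvec (u + x))"
  have ny: "norm (rvec y) \<le> norm (rvec x) + D"
    using norm_triangle_ineq2[of "rvec y" "rvec x"] assms(4) by simp
  have "\<bar>a - b\<bar> = \<beta> * \<bar>g (\<epsilon> *\<^sub>R rvec (u + y)) - g (\<epsilon> *\<^sub>R rvec (u + x))\<bar>"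
    using assms by (simp add: a_def b_def abs_mult flip: right_diff_distrib)
  also have "\<dots> \<le> \<beta> * (L * norm (\<epsilon> *\<^sub>R rvec (u + y) - \<epsilon> *\<^sub>R rvec (u + x)))"
    using lipschitz_onD[OF lip, of "\<epsilon> *\<^sub>R rvec (u + y)" "\<epsilon> *\<^sub>R rvec (u + x)"] assms
    by (intro mult_left_mono) (auto simp: dist_norm dist_real_def)
  also have "norm (\<epsilon> *\<^sub>R rvec (u + y) - \<epsilon> *\<^sub>R rvec (u + x)) = \<epsilon> * norm (rvec y - rvec x)"
    using assms by (simp add: rvec_add flip: scaleR_diff_right)
  also have "\<beta> * (L * (\<epsilon> * norm (rvec y - rvec x))) \<le> \<beta> * (L * (\<epsilon> * D))"
    using assms L0 by (intro mult_left_mono) auto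
  finally have ab: "\<bar>a - b\<bar> \<le> \<beta> * L * \<epsilon> * D" by (simp add: mult_ac)
  have gz: "g (\<epsilon> *\<^sub>R rvec (u + z)) \<le> \<bar>g 0\<bar> + L * \<epsilon> * (norm (rvec u) + norm (rvec x) + D)"
    if "norm (rvec z) \<le> norm (rvec x) + D" for z
  proof -
    have h1: "g (\<epsilon> *\<^sub>R rvec (u + z)) \<le> \<bar>g 0\<bar> + L * norm (\<epsilon> *\<^sub>R rvec (u + z))" by (rule lip_bound[OF lip])
    have n: "norm (\<epsilon> *\<^sub>R rvec (u + z)) \<le> \<epsilon> * (norm (rvec u) + norm (rvec x) + D)"
      using assms that norm_triangle_ineq[of "rvec u" "rvec z"]
      by (auto simp: rvec_add intro!: mult_left_mono)
    have "L * norm (\<epsilon> *\<^sub>R rvec (u + z)) \<le> L * (\<epsilon> * (norm (rvec u) + norm (rvec x) + D))"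
      using mult_left_mono[OF n L0] .
    then show ?thesis using h1 by (simp only: mult.assoc)
  qed
  have "max a b \<le> \<beta> * (\<bar>g 0\<bar> + L * \<epsilon> * (norm (rvec u) + norm (rvec x) + D))"
    unfolding a_def b_def using gz[OF ny] gz[of x] assms(2) L0 assms(4) order_trans[OF norm_ge_zero assms(4)]
    by (auto intro!: mult_left_mono simp: max_def)
  then have em: "exp (max a b) \<le> exp (\<beta> * \<bar>g 0\<bar>) * exp (\<beta> * L * \<epsilon> * (norm (rvec x) + D)) * exp (\<beta> * L * \<epsilon> * norm (rvec u))"
    by (simp flip: exp_add add: algebra_simps)
  have "\<bar>exp a - exp b\<bar> \<le> exp (max a b) * \<bar>a - b\<bar>" by (rule exp_diff_bound)
  also have "\<dots> \<le> (exp (\<beta> * \<bar>g 0\<bar>) * exp (\<beta> * L * \<epsilon> * (norm (rvec x) + D)) * exp (\<beta> * L * \<epsilon> * norm (rvec u))) * (\<beta> * L * \<epsilon> * D)"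
    by (intro mult_mono em ab) auto
  finally show ?thesis unfolding a_def b_def by (simp add: mult_ac)
qed

lemma G_diff:
  fixes g :: "real^'d::finite \<Rightarrow> real"
  assumes lip: "L-lipschitz_on UNIV g" and "0 \<le> \<beta>" "0 \<le> \<epsilon>" "norm (rvec y - rvec x) \<le> D"
  shows "\<bar>Gfun \<beta> g \<epsilon> s y - Gfun \<beta> g \<epsilon> s x\<bar>
     \<le> (\<beta> * L * exp (\<beta> * \<bar>g 0\<bar>) * exp (\<beta> * L * \<epsilon> * (norm (rvec x) + D)) * \<epsilon> * D)
        * (2 * real CARD('d) * exp ((real CARD('d) * (\<beta> * L * \<epsilon>))\<^sup>2 * real s / 2))"
proof -
  have L0: "0 \<le> L" using lipschitz_on_nonneg[OF lip] .
  define K where "K = \<beta> * L * exp (\<beta> * \<bar>g 0\<bar>) * exp (\<beta> * L * \<epsilon> * (norm (rvec x) + D)) * \<epsilon> * D"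
  define N :: real where "N = (2 * real CARD('d)) ^ s"
  have N0: "N > 0" unfolding N_def by simp
  have "Gfun \<beta> g \<epsilon> s y - Gfun \<beta> g \<epsilon> s x
     = (\<Sum>w\<in>(walks0 s :: (nat \<Rightarrow> int^'d) set). exp (\<beta> * g (\<epsilon> *\<^sub>R rvec (w s + y))) - exp (\<beta> * g (\<epsilon> *\<^sub>R rvec (w s + x)))) / N"
    unfolding Gfun_def N_def by (simp add: sum_subtractf diff_divide_distrib)
  then have "\<bar>Gfun \<beta> g \<epsilon> s y - Gfun \<beta> g \<epsilon> s x\<bar>
     \<le> (\<Sum>w\<in>(walks0 s :: (nat \<Rightarrow> int^'d) set). \<bar>exp (\<beta> * g (\<epsilon> *\<^sub>R rvec (w s + y))) - exp (\<beta> * g (\<epsilon> *\<^sub>R rvec (w s + x)))\<bar>) / N"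
    using N0 by (simp add: divide_right_mono sum_abs)
  also have "\<dots> \<le> (\<Sum>w\<in>(walks0 s :: (nat \<Rightarrow> int^'d) set). K * exp ((\<beta> * L * \<epsilon>) * norm (rvec (w s)))) / N"
    using N0 by (intro divide_right_mono sum_mono) (use G_term_bound[OF assms] in \<open>simp_all add: K_def\<close>)
  also have "\<dots> = K * ((\<Sum>w\<in>(walks0 s :: (nat \<Rightarrow> int^'d) set). exp ((\<beta> * L * \<epsilon>) * norm (rvec (w s)))) / N)"
    by (simp add: sum_distrib_left)
  also have "\<dots> \<le> K * (2 * real CARD('d) * exp ((real CARD('d) * (\<beta> * L * \<epsilon>))\<^sup>2 * real s / 2))"
  proof (intro mult_left_mono)
    show "0 \<le> K" unfolding K_def using assms L0 order_trans[OF norm_ge_zero assms(4)] by simp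
    have "(\<Sum>w\<in>(walks0 s :: (nat \<Rightarrow> int^'d) set). exp ((\<beta> * L * \<epsilon>) * norm (rvec (w s))))
        \<le> 2 * real CARD('d) * N * exp ((real CARD('d) * (\<beta> * L * \<epsilon>))\<^sup>2 * real s / 2)"
      unfolding N_def by (rule walk_abs_exp) (use assms L0 in simp)
    then show "(\<Sum>w\<in>(walks0 s :: (nat \<Rightarrow> int^'d) set). exp ((\<beta> * L * \<epsilon>) * norm (rvec (w s)))) / N
        \<le> 2 * real CARD('d) * exp ((real CARD('d) * (\<beta> * L * \<epsilon>))\<^sup>2 * real s / 2)"
      using N0 by (simp add: divide_le_eq mult_ac)
  qed
  finally show ?thesis unfolding K_def .
qed

lemma lip_meas: "L-lipschitz_on UNIV f \<Longrightarrow> (f :: real \<Rightarrow> real) \<in> borel_measurable borel"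
  by (rule borel_measurable_continuous_onI, rule lipschitz_on_continuous_on)

lemma sets_std_gauss[measurable_cong, simp]: "sets std_gauss = sets borel"
  unfolding std_gauss_def by simp

lemma space_std_gauss[simp]: "space std_gauss = UNIV"
  unfolding std_gauss_def by simp

lemma prob_space_std_gauss: "prob_space std_gauss"
  unfolding std_gauss_def by (rule prob_space_normal_density) simp

lemma gauss_integrable:
  fixes \<phi> :: "real \<Rightarrow> real"
  assumes lip: "L-lipschitz_on UNIV \<phi>"
  shows "integrable std_gauss (\<lambda>z. exp (\<beta> * \<phi> z))"
proof -
  have L0: "0 \<le> L" using lipschitz_on_nonneg[OF lip] .
  have [measurable]: "\<phi> \<in> borel_measurable borel" by (rule lip_meas[OF lip])
  define c where "c = \<bar>\<beta>\<bar> * L"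
  define K where "K = exp (\<bar>\<beta>\<bar> * \<bar>\<phi> 0\<bar> + c\<^sup>2) * 2"
  have bound: "std_normal_density z * exp (\<beta> * \<phi> z) \<le> K * normal_density 0 (sqrt 2) z" for z
  proof -
    have "\<bar>\<phi> z - \<phi> 0\<bar> \<le> L * \<bar>z\<bar>"
      using lipschitz_onD[OF lip, of z 0] by (simp add: dist_real_def)
    then have pz: "\<bar>\<phi> z\<bar> \<le> \<bar>\<phi> 0\<bar> + L * \<bar>z\<bar>" by linarith
    have "\<beta> * \<phi> z \<le> \<bar>\<beta>\<bar> * \<bar>\<phi> z\<bar>" by (metis abs_ge_self abs_mult)
    also have "\<dots> \<le> \<bar>\<beta>\<bar> * (\<bar>\<phi> 0\<bar> + L * \<bar>z\<bar>)" by (intro mult_left_mono pz) simp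
    finally have "\<beta> * \<phi> z \<le> \<bar>\<beta>\<bar> * \<bar>\<phi> 0\<bar> + c * \<bar>z\<bar>"
      unfolding c_def by (simp add: algebra_simps)
    moreover have "c * \<bar>z\<bar> \<le> c\<^sup>2 + z\<^sup>2 / 4"
    proof -
      have "0 \<le> (c - \<bar>z\<bar> / 2)\<^sup>2" by simp
      then show ?thesis by (simp add: power2_eq_square algebra_simps)
    qed
    ultimately have e1: "- z\<^sup>2 / 2 + \<beta> * \<phi> z \<le> (\<bar>\<beta>\<bar> * \<bar>\<phi> 0\<bar> + c\<^sup>2) + (- z\<^sup>2 / 4)"
      by linarith
    have "std_normal_density z * exp (\<beta> * \<phi> z) = (1 / sqrt (2 * pi)) * (exp (- z\<^sup>2 / 2) * exp (\<beta> * \<phi> z))"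
      by (simp add: std_normal_density_def)
    also have "\<dots> \<le> (1 / sqrt (2 * pi)) * (exp (\<bar>\<beta>\<bar> * \<bar>\<phi> 0\<bar> + c\<^sup>2) * exp (- z\<^sup>2 / 4))"
    proof (intro mult_left_mono)
      show "exp (- z\<^sup>2 / 2) * exp (\<beta> * \<phi> z) \<le> exp (\<bar>\<beta>\<bar> * \<bar>\<phi> 0\<bar> + c\<^sup>2) * exp (- z\<^sup>2 / 4)"
        unfolding exp_add[symmetric] using e1 by simp
    qed simp
    also have "\<dots> = K * normal_density 0 (sqrt 2) z / sqrt 2"
      by (simp add: K_def normal_density_def real_sqrt_mult field_simps)
    also have "\<dots> \<le> K * normal_density 0 (sqrt 2) z"
    proof -
      have "0 \<le> K * normal_density 0 (sqrt 2) z" by (simp add: K_def)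
      moreover have "1 \<le> sqrt (2::real)" by simp
      ultimately show ?thesis by (simp add: divide_le_eq mult_le_cancel_left1 mult_le_cancel_right1 order_trans)
    qed
    finally show ?thesis .
  qed
  have i1: "integrable lborel (\<lambda>z. K * normal_density 0 (sqrt 2) z)" by simp
  have m1: "(\<lambda>z. std_normal_density z *\<^sub>R exp (\<beta> * \<phi> z)) \<in> borel_measurable lborel" by measurable
  have ae: "AE z in lborel. norm (std_normal_density z *\<^sub>R exp (\<beta> * \<phi> z)) \<le> norm (K * normal_density 0 (sqrt 2) z)"
    using bound by (auto simp: K_def)
  have "integrable lborel (\<lambda>z. std_normal_density z *\<^sub>R exp (\<beta> * \<phi> z))"
    by (rule Bochner_Integration.integrable_bound[OF i1 m1 ae])
  then show ?thesis unfolding std_gauss_def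
    by (subst integrable_density) auto
qed

lemma mgf_pos:
  fixes \<phi> :: "real \<Rightarrow> real"
  assumes lip: "L-lipschitz_on UNIV \<phi>"
  shows "mgf \<phi> \<beta> > 0"
proof -
  interpret prob_space std_gauss by (rule prob_space_std_gauss)
  have [measurable]: "\<phi> \<in> borel_measurable borel" by (rule lip_meas[OF lip])
  have int: "integrable std_gauss (\<lambda>z. exp (\<beta> * \<phi> z))" by (rule gauss_integrable[OF lip])
  have nn: "0 \<le> (\<integral>z. exp (\<beta> * \<phi> z) \<partial>std_gauss)" by (intro integral_nonneg_AE) simp
  have ne: "(\<integral>z. exp (\<beta> * \<phi> z) \<partial>std_gauss) \<noteq> 0"
  proof
    assume "(\<integral>z. exp (\<beta> * \<phi> z) \<partial>std_gauss) = 0"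
    then have "AE z in std_gauss. exp (\<beta> * \<phi> z) = 0"
      using integral_nonneg_eq_0_iff_AE[OF int] by simp
    then have "AE z in std_gauss. False" by simp
    then show False using AE_False emeasure_space_1 by simp
  qed
  have "0 < (\<integral>z. exp (\<beta> * \<phi> z) \<partial>std_gauss)" using nn ne by linarith
  then show ?thesis by (simp add: mgf_def)
qed

definition gen :: "'a measure \<Rightarrow> (nat \<Rightarrow> int^'d \<Rightarrow> 'a \<Rightarrow> real) \<Rightarrow> nat \<Rightarrow> nat \<Rightarrow> 'a set set" where
  "gen M \<xi> a b = {\<xi> u y -` A \<inter> space M | u y A. Suc a \<le> u \<and> u \<le> b \<and> A \<in> sets borel}"

lemma gen_Pow: "gen M \<xi> a b \<subseteq> Pow (space M)"
  unfolding gen_def by auto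

lemma space_Fsig[simp]: "space (Fsig M \<xi> a b) = space M"
  unfolding Fsig_def by (simp add: space_measure_of_conv)

lemma sets_Fsig: "sets (Fsig M \<xi> a b) = sigma_sets (space M) (gen M \<xi> a b)"
  unfolding Fsig_def gen_def[symmetric] by (rule sets_measure_of[OF gen_Pow])

lemma Fsig_meas: "Suc a \<le> u \<Longrightarrow> u \<le> b \<Longrightarrow> \<xi> u y \<in> borel_measurable (Fsig M \<xi> a b)"
proof (rule measurableI)
  fix A :: "real set" assume "Suc a \<le> u" "u \<le> b" "A \<in> sets borel"
  then have "\<xi> u y -` A \<inter> space M \<in> gen M \<xi> a b" unfolding gen_def by blast
  then show "\<xi> u y -` A \<inter> space (Fsig M \<xi> a b) \<in> sets (Fsig M \<xi> a b)"
    by (simp add: sets_Fsig sigma_sets.Basic)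
qed simp

lemma iid_prob: "iid_field M \<phi> \<xi> \<Longrightarrow> prob_space M"
  unfolding iid_field_def by simp

lemma iid_indep: "iid_field M \<phi> \<xi> \<Longrightarrow> prob_space.indep_vars M (\<lambda>_. borel) (\<lambda>(u, y). \<xi> u y) ({1..} \<times> UNIV)"
  unfolding iid_field_def by simp

lemma iid_meas: "iid_field M \<phi> \<xi> \<Longrightarrow> 1 \<le> u \<Longrightarrow> \<xi> u y \<in> borel_measurable M"
proof -
  assume iid: "iid_field M \<phi> \<xi>" and u: "1 \<le> u"
  interpret prob_space M using iid_prob[OF iid] .
  have "\<forall>i\<in>{1..} \<times> UNIV. random_variable borel ((\<lambda>(u, y). \<xi> u y) i)"
    using iid_indep[OF iid] unfolding indep_vars_def by simp
  then show ?thesis using u by auto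
qed

lemma iid_distr: "iid_field M \<phi> \<xi> \<Longrightarrow> 1 \<le> u \<Longrightarrow> distr M borel (\<xi> u y) = distr std_gauss borel \<phi>"
  unfolding iid_field_def by simp

lemma Fsig_sub: "iid_field M \<phi> \<xi> \<Longrightarrow> subalgebra M (Fsig M \<xi> a b)"
  unfolding subalgebra_def
proof safe
  assume iid: "iid_field M \<phi> \<xi>"
  have "gen M \<xi> a b \<subseteq> sets M"
    unfolding gen_def using iid_meas[OF iid] by auto
  then show "x \<in> sets M" if "x \<in> sets (Fsig M \<xi> a b)" for x
    using that sets.sigma_sets_subset[of "gen M \<xi> a b" M] by (auto simp: sets_Fsig)
qed simp_all

lemma Fsig_sfs: "iid_field M \<phi> \<xi> \<Longrightarrow> sigma_finite_subalgebra M (Fsig M \<xi> a b)"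
proof -
  assume iid: "iid_field M \<phi> \<xi>"
  interpret prob_space M using iid_prob[OF iid] .
  have "finite_measure_subalgebra M (Fsig M \<xi> a b)"
    unfolding finite_measure_subalgebra_def finite_measure_subalgebra_axioms_def
    using Fsig_sub[OF iid] finite_measure_axioms by simp
  then show ?thesis by (rule finite_measure_subalgebra_is_sigma_finite)
qed

lemma indep_Fsig:
  fixes \<xi> :: "nat \<Rightarrow> int^'d \<Rightarrow> 'a \<Rightarrow> real"
  assumes iid: "iid_field M \<phi> \<xi>" and st: "s \<le> t"
  shows "prob_space.indep_set M (sets (Fsig M \<xi> 0 s)) (sets (Fsig M \<xi> s t))"
proof -
  interpret prob_space M using iid_prob[OF iid] .
  define E where "E = (\<lambda>i. {(\<lambda>(u, y). \<xi> u y) i -` A \<inter> space M | A. A \<in> sets (borel :: real measure)})"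
  define I' where "I' = (\<lambda>j::bool. if j then {1..s} \<times> (UNIV :: (int^'d) set) else {Suc s..t} \<times> UNIV)"
  have ind: "indep_sets E ({1..} \<times> UNIV)"
    using iid_indep[OF iid] unfolding indep_vars_def2 E_def by simp
  have ind2: "indep_sets E (\<Union>j. I' j)"
    by (rule indep_sets_mono_index[OF _ ind]) (auto simp: I'_def)
  have ind3: "indep_sets (\<lambda>j. sigma_sets (space M) (\<Union>i\<in>I' j. E i)) UNIV"
  proof (rule indep_sets_collect_sigma[OF ind2])
    fix i j assume "j \<in> (UNIV::bool set)" "i \<in> I' j"
    show "Int_stable (E i)"
      unfolding E_def Int_stable_def
      apply auto
      apply (rule_tac x="A \<inter> Aa" in exI)
      apply auto
      done
  next
    show "disjoint_family_on I' UNIV"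
      unfolding disjoint_family_on_def I'_def by auto
  qed
  have g1: "(\<Union>i\<in>I' True. E i) = gen M \<xi> 0 s"
    unfolding I'_def E_def gen_def by auto (blast intro: atLeastAtMost_iff[THEN iffD2])+
  have g2: "(\<Union>i\<in>I' False. E i) = gen M \<xi> s t"
    unfolding I'_def E_def gen_def by auto (blast intro: atLeastAtMost_iff[THEN iffD2])+
  show ?thesis
    unfolding indep_set_def sets_Fsig using ind3
    by (rule indep_sets_mono_sets) (use g1 g2 in \<open>auto split: bool.split\<close>)
qed

lemma indep_mult:
  fixes X Y :: "'a \<Rightarrow> real"
  assumes iid: "iid_field M \<phi> \<xi>" and st: "s \<le> t"
    and X: "X \<in> borel_measurable (Fsig M \<xi> 0 s)" and Y: "Y \<in> borel_measurable (Fsig M \<xi> s t)"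
    and iX: "integrable M X" and iY: "integrable M Y"
  shows "integrable M (\<lambda>\<omega>. X \<omega> * Y \<omega>) \<and> (\<integral>\<omega>. X \<omega> * Y \<omega> \<partial>M) = (\<integral>\<omega>. X \<omega> \<partial>M) * (\<integral>\<omega>. Y \<omega> \<partial>M)"
proof -
  interpret prob_space M using iid_prob[OF iid] .
  have sX: "sigma_sets (space M) {X -` A \<inter> space M | A. A \<in> sets borel} \<subseteq> sets (Fsig M \<xi> 0 s)"
  proof -
    have "{X -` A \<inter> space M | A. A \<in> sets borel} \<subseteq> sets (Fsig M \<xi> 0 s)"
      using X by (auto simp: measurable_def)
    from sets.sigma_sets_subset[OF this] show ?thesis by simp
  qed
  have sY: "sigma_sets (space M) {Y -` A \<inter> space M | A. A \<in> sets borel} \<subseteq> sets (Fsig M \<xi> s t)"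
  proof -
    have "{Y -` A \<inter> space M | A. A \<in> sets borel} \<subseteq> sets (Fsig M \<xi> s t)"
      using Y by (auto simp: measurable_def)
    from sets.sigma_sets_subset[OF this] show ?thesis by simp
  qed
  have "indep_var borel X borel Y"
    unfolding indep_var_eq
  proof (intro conjI)
    show "random_variable borel X" by (rule measurable_from_subalg[OF Fsig_sub[OF iid] X])
    show "random_variable borel Y" by (rule measurable_from_subalg[OF Fsig_sub[OF iid] Y])
    show "indep_set (sigma_sets (space M) {X -` A \<inter> space M |A. A \<in> sets borel})
                    (sigma_sets (space M) {Y -` A \<inter> space M |A. A \<in> sets borel})"
      using indep_Fsig[OF iid st] unfolding indep_set_def
      by (rule indep_sets_mono_sets) (use sX sY in \<open>auto split: bool.split\<close>)
  qed
  then show ?thesis using indep_var_lebesgue_integral indep_var_integrable iX iY by blast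
qed

lemma sum_split_1t:
  assumes "s \<le> t"
  shows "(\<Sum>i\<in>{1..t}. F i) = (\<Sum>i\<in>{1..s}. F i) + (\<Sum>i\<in>{Suc s..t}. F i)"
proof -
  have "{1..t} = {1..s} \<union> {Suc s..t}" using assms by auto
  then show ?thesis by (simp add: sum.union_disjoint)
qed

lemma paths_decomp:
  fixes x :: "int^'d::finite" and f :: "nat \<Rightarrow> int^'d \<Rightarrow> real"
  assumes st: "s \<le> t"
  shows "(\<Sum>q\<in>paths 0 t x. c (q 0) * exp (\<beta> * (\<Sum>i\<in>{1..t}. f i (q i))))
    = (\<Sum>r\<in>paths s t x. exp (\<beta> * (\<Sum>i\<in>{Suc s..t}. f i (r i))) *
         (\<Sum>p\<in>paths 0 s (r s). c (p 0) * exp (\<beta> * (\<Sum>i\<in>{1..s}. f i (p i)))))"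
proof -
  define H where "H = (\<lambda>(r::nat \<Rightarrow> int^'d, p::nat \<Rightarrow> int^'d). exp (\<beta> * (\<Sum>i\<in>{Suc s..t}. f i (r i))) *
         (c (p 0) * exp (\<beta> * (\<Sum>i\<in>{1..s}. f i (p i)))))"
  define \<Phi> where "\<Phi> = (\<lambda>q::nat \<Rightarrow> int^'d. ((\<lambda>i. if s \<le> i \<and> i \<le> t then q i else 0), (\<lambda>i. if i \<le> s then q i else 0)))"
  have bij: "bij_betw \<Phi> (paths 0 t x) (SIGMA r:paths s t x. paths 0 s (r s))"
    unfolding \<Phi>_def by (rule paths_split_bij[OF st])
  have "H (\<Phi> q) = c (q 0) * exp (\<beta> * (\<Sum>i\<in>{1..t}. f i (q i)))" for q
  proof -
    have e1: "(\<Sum>i\<in>{Suc s..t}. f i (if s \<le> i \<and> i \<le> t then q i else 0)) = (\<Sum>i\<in>{Suc s..t}. f i (q i))"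
      by (intro sum.cong) auto
    have e2: "(\<Sum>i\<in>{1..s}. f i (if i \<le> s then q i else 0)) = (\<Sum>i\<in>{1..s}. f i (q i))"
      by (intro sum.cong) auto
    show ?thesis
      unfolding H_def \<Phi>_def using e1 e2 sum_split_1t[OF st, of "\<lambda>i. f i (q i)"]
      by (simp add: distrib_left exp_add mult_ac)
  qed
  then have "(\<Sum>q\<in>paths 0 t x. c (q 0) * exp (\<beta> * (\<Sum>i\<in>{1..t}. f i (q i)))) = (\<Sum>q\<in>paths 0 t x. H (\<Phi> q))"
    by simp
  also have "\<dots> = (\<Sum>z\<in>(SIGMA r:paths s t x. paths 0 s (r s)). H z)"
    by (rule sum.reindex_bij_betw[OF bij])
  also have "\<dots> = (\<Sum>r\<in>paths s t x. \<Sum>p\<in>paths 0 s (r s). H (r, p))"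
  proof -
    have fin: "\<forall>r\<in>paths s t x. finite (paths 0 s (r s))" using finite_paths[of 0 s] by auto
    show ?thesis using sum.Sigma[OF finite_paths[OF st] fin, of "\<lambda>r p. H (r, p)"] by (simp add: case_prod_eta)
  qed
  also have "\<dots> = (\<Sum>r\<in>paths s t x. exp (\<beta> * (\<Sum>i\<in>{Suc s..t}. f i (r i))) *
         (\<Sum>p\<in>paths 0 s (r s). c (p 0) * exp (\<beta> * (\<Sum>i\<in>{1..s}. f i (p i)))))"
    unfolding H_def by (simp add: sum_distrib_left)
  finally show ?thesis .
qed

lemma exp_xi:
  fixes \<phi> :: "real \<Rightarrow> real"
  assumes iid: "iid_field M \<phi> \<xi>" and lip: "L-lipschitz_on UNIV \<phi>" and u: "1 \<le> u"
  shows "integrable M (\<lambda>\<omega>. exp (\<beta> * \<xi> u y \<omega>)) \<and> (\<integral>\<omega>. exp (\<beta> * \<xi> u y \<omega>) \<partial>M) = mgf \<phi> \<beta>"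
proof -
  have xm[measurable]: "\<xi> u y \<in> borel_measurable M" by (rule iid_meas[OF iid u])
  have pm: "\<phi> \<in> measurable std_gauss borel"
    by (subst measurable_cong_sets[OF sets_std_gauss refl]) (rule lip_meas[OF lip])
  have ex[measurable]: "(\<lambda>z::real. exp (\<beta> * z)) \<in> borel_measurable borel" by measurable
  have d: "distr M borel (\<xi> u y) = distr std_gauss borel \<phi>" by (rule iid_distr[OF iid u])
  have "(\<integral>\<omega>. exp (\<beta> * \<xi> u y \<omega>) \<partial>M) = (\<integral>z. exp (\<beta> * z) \<partial>distr M borel (\<xi> u y))"
    by (rule integral_distr[symmetric]) simp_all
  also have "\<dots> = (\<integral>z. exp (\<beta> * z) \<partial>distr std_gauss borel \<phi>)" by (simp add: d)
  also have "\<dots> = (\<integral>z. exp (\<beta> * \<phi> z) \<partial>std_gauss)" by (rule integral_distr[OF pm ex])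
  finally have i: "(\<integral>\<omega>. exp (\<beta> * \<xi> u y \<omega>) \<partial>M) = mgf \<phi> \<beta>" by (simp add: mgf_def)
  have "integrable std_gauss (\<lambda>z. exp (\<beta> * \<phi> z))" by (rule gauss_integrable[OF lip])
  then have "integrable (distr std_gauss borel \<phi>) (\<lambda>z. exp (\<beta> * z))"
    by (subst integrable_distr_eq[OF pm ex])
  then have "integrable (distr M borel (\<xi> u y)) (\<lambda>z. exp (\<beta> * z))" by (simp add: d)
  then have "integrable M (\<lambda>\<omega>. exp (\<beta> * \<xi> u y \<omega>))"
    by (subst (asm) integrable_distr_eq) simp_all
  with i show ?thesis by simp
qed

lemma exp_path:
  fixes \<phi> :: "real \<Rightarrow> real" and p :: "nat \<Rightarrow> int^'d"
  assumes iid: "iid_field M \<phi> \<xi>" and lip: "L-lipschitz_on UNIV \<phi>"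
  shows "integrable M (\<lambda>\<omega>. exp (\<beta> * (\<Sum>i\<in>{1..s}. \<xi> i (p i) \<omega>)))
     \<and> (\<integral>\<omega>. exp (\<beta> * (\<Sum>i\<in>{1..s}. \<xi> i (p i) \<omega>)) \<partial>M) = mgf \<phi> \<beta> ^ s"
proof -
  interpret prob_space M using iid_prob[OF iid] .
  define X' where "X' = (\<lambda>j \<omega>. exp (\<beta> * (\<lambda>(u, y). \<xi> u y) j \<omega>))"
  define J where "J = (\<lambda>i. (i, p i)) ` {1..s}"
  have ind: "indep_vars (\<lambda>_. borel) X' ({1..} \<times> UNIV)"
    unfolding X'_def
    by (rule indep_vars_compose2[OF iid_indep[OF iid], where Y="\<lambda>_ z. exp (\<beta> * z)"]) measurable
  have indJ: "indep_vars (\<lambda>_. borel) X' J"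
    by (rule indep_vars_subset[OF ind]) (auto simp: J_def)
  have inj: "inj_on (\<lambda>i. (i, p i)) {1..s}" by (auto intro: inj_onI)
  have fJ: "finite J" by (simp add: J_def)
  have intJ: "integrable M (X' j)" if "j \<in> J" for j
    using that exp_xi[OF iid lip] unfolding J_def X'_def by auto
  have eq: "exp (\<beta> * (\<Sum>i\<in>{1..s}. \<xi> i (p i) \<omega>)) = (\<Prod>j\<in>J. X' j \<omega>)" for \<omega>
    unfolding J_def X'_def by (subst prod.reindex[OF inj]) (simp add: sum_distrib_left exp_sum)
  have "(\<integral>\<omega>. (\<Prod>j\<in>J. X' j \<omega>) \<partial>M) = (\<Prod>j\<in>J. \<integral>\<omega>. X' j \<omega> \<partial>M)"
    by (rule indep_vars_lebesgue_integral[OF fJ indJ intJ])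
  also have "\<dots> = (\<Prod>i\<in>{1..s}. \<integral>\<omega>. exp (\<beta> * \<xi> i (p i) \<omega>) \<partial>M)"
    unfolding J_def X'_def by (subst prod.reindex[OF inj]) simp
  also have "\<dots> = (\<Prod>i\<in>{1..s}. mgf \<phi> \<beta>)"
    by (intro prod.cong refl) (use exp_xi[OF iid lip] in auto)
  finally have "(\<integral>\<omega>. (\<Prod>j\<in>J. X' j \<omega>) \<partial>M) = mgf \<phi> \<beta> ^ s" by simp
  moreover have "integrable M (\<lambda>\<omega>. (\<Prod>j\<in>J. X' j \<omega>))"
    by (rule indep_vars_integrable[OF fJ indJ intJ])
  ultimately show ?thesis unfolding eq by simp
qed

lemma exp_path_meas:
  fixes p :: "nat \<Rightarrow> int^'d"
  assumes "a \<le> b"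
  shows "(\<lambda>\<omega>. exp (\<beta> * (\<Sum>i\<in>{Suc a..b}. \<xi> i (p i) \<omega>))) \<in> borel_measurable (Fsig M \<xi> a b)"
proof -
  have "(\<lambda>\<omega>. (\<Sum>i\<in>{Suc a..b}. \<xi> i (p i) \<omega>)) \<in> borel_measurable (Fsig M \<xi> a b)"
    by (rule borel_measurable_sum) (auto intro: Fsig_meas)
  then show ?thesis by measurable
qed

lemma main_prob:
  fixes M :: "'a measure" and \<xi> :: "nat \<Rightarrow> int^'d::finite \<Rightarrow> 'a \<Rightarrow> real"
    and g :: "real^'d \<Rightarrow> real" and \<phi> :: "real \<Rightarrow> real"
  assumes iid: "iid_field M \<phi> \<xi>" and lip: "L\<phi>-lipschitz_on UNIV \<phi>" and st: "s < t"
    and bnd: "\<And>r. r \<in> paths s t x \<Longrightarrow> \<bar>Gfun \<beta> g \<epsilon> s (r s) - Gfun \<beta> g \<epsilon> s x\<bar> \<le> Bd"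
  shows "AE \<omega> in M. \<bar>real_cond_exp M (Fsig M \<xi> s t) (Wfun \<phi> \<beta> g \<epsilon> \<xi> s t x) \<omega> - Gfun \<beta> g \<epsilon> s x\<bar> \<le> Bd"
proof -
  interpret prob_space M using iid_prob[OF iid] .
  interpret sigma_finite_subalgebra M "Fsig M \<xi> s t" using Fsig_sfs[OF iid] .
  have st': "s \<le> t" using st by simp
  obtain k where tk: "t = s + k" using st' le_iff_add by blast
  define m where "m = mgf \<phi> \<beta>"
  have m0: "m > 0" unfolding m_def using mgf_pos[OF lip] .
  define P where "P = paths s t x"
  have fP: "finite P" and neP: "P \<noteq> {}" using finite_paths[OF st'] paths_nonempty[OF st'] by (auto simp: P_def)
  define a where "a r \<omega> = exp (\<beta> * (\<Sum>i\<in>{Suc s..t}. \<xi> i (r i) \<omega>))" for r :: "nat \<Rightarrow> int^'d" and \<omega>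
  define S where "S \<omega> = (\<Sum>r\<in>P. a r \<omega>)" for \<omega>
  have S0: "S \<omega> > 0" for \<omega> unfolding S_def a_def using fP neP by (intro sum_pos) auto
  define c where "c p = exp (\<beta> * g (\<epsilon> *\<^sub>R rvec (p 0)))" for p :: "nat \<Rightarrow> int^'d"
  define N where "N y \<omega> = (\<Sum>p\<in>paths 0 s y. c p * exp (\<beta> * (\<Sum>i\<in>{1..s}. \<xi> i (p i) \<omega>)))" for y \<omega>
  define K where "K = (2 * real CARD('d)) ^ s * m ^ s"
  have K0: "K > 0" unfolding K_def using m0 by simp
  define B where "B y \<omega> = N y \<omega> / K" for y \<omega>
  define w where "w r \<omega> = a r \<omega> / S \<omega>" for r \<omega>
  define h where "h \<omega> = (\<Sum>r\<in>P. w r \<omega> * Gfun \<beta> g \<epsilon> s (r s))" for \<omega>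
  define W where "W = Wfun \<phi> \<beta> g \<epsilon> \<xi> s t x"
  define Q where "Q = (2 * real CARD('d)) ^ k * m ^ k"
  have Q0: "Q > 0" unfolding Q_def using m0 by simp

  have W_eq: "W \<omega> = (\<Sum>r\<in>P. w r \<omega> * B (r s) \<omega>)" for \<omega>
  proof -
    have Z: "Zfun \<phi> \<beta> g \<epsilon> \<xi> t x \<omega> = (\<Sum>r\<in>P. a r \<omega> * N (r s) \<omega>) / (K * Q)"
    proof -
      have "(\<Sum>q\<in>paths 0 t x. exp (\<beta> * g (\<epsilon> *\<^sub>R rvec (q 0))) * exp (\<beta> * (\<Sum>i\<in>{1..t}. \<xi> i (q i) \<omega>)))
          = (\<Sum>r\<in>P. a r \<omega> * N (r s) \<omega>)"
        unfolding P_def a_def N_def c_def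
        by (rule paths_decomp[OF st', of "\<lambda>v. exp (\<beta> * g (\<epsilon> *\<^sub>R rvec v))" \<beta> "\<lambda>i y. \<xi> i y \<omega>" x])
      moreover have "(2 * real CARD('d)) ^ t * m ^ t = K * Q"
        unfolding K_def Q_def tk by (simp add: power_add mult_ac)
      ultimately show ?thesis unfolding Zfun_def m_def by simp
    qed
    have Y: "Yfun \<phi> \<beta> \<xi> s t x \<omega> = S \<omega> / Q"
      unfolding Yfun_def S_def a_def P_def m_def Q_def tk by simp
    have "(\<Sum>r\<in>P. w r \<omega> * B (r s) \<omega>) = (\<Sum>r\<in>P. a r \<omega> * N (r s) \<omega>) / (S \<omega> * K)"
      unfolding w_def B_def by (simp add: sum_divide_distrib)
    moreover have "W \<omega> = (\<Sum>r\<in>P. a r \<omega> * N (r s) \<omega>) / (S \<omega> * K)"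
      unfolding W_def Wfun_def Z Y using Q0 K0 S0[of \<omega>] by (simp add: field_simps)
    ultimately show ?thesis by simp
  qed

  have a_m[measurable]: "a r \<in> borel_measurable (Fsig M \<xi> s t)" for r
    unfolding a_def by (rule exp_path_meas[OF st'])
  have S_m[measurable]: "S \<in> borel_measurable (Fsig M \<xi> s t)"
    unfolding S_def by (rule borel_measurable_sum) simp
  have w_m[measurable]: "w r \<in> borel_measurable (Fsig M \<xi> s t)" for r
    unfolding w_def by measurable
  have w_mM[measurable]: "w r \<in> borel_measurable M" for r
    by (rule measurable_from_subalg[OF Fsig_sub[OF iid] w_m])
  have w01: "0 \<le> w r \<omega> \<and> w r \<omega> \<le> 1" if "r \<in> P" for r \<omega>
  proof -
    have "a r \<omega> \<le> S \<omega>" unfolding S_def using that fP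
      by (intro member_le_sum) (auto simp: a_def)
    then show ?thesis unfolding w_def using S0[of \<omega>] by (auto simp: a_def)
  qed
  have wsum: "(\<Sum>r\<in>P. w r \<omega>) = 1" for \<omega>
    unfolding w_def S_def using S0[of \<omega>] by (simp add: sum_divide_distrib[symmetric] S_def)

  have e_m[measurable]: "(\<lambda>\<omega>. exp (\<beta> * (\<Sum>i\<in>{1..s}. \<xi> i (p i) \<omega>))) \<in> borel_measurable (Fsig M \<xi> 0 s)" for p :: "nat \<Rightarrow> int^'d"
    using exp_path_meas[of 0 s \<beta> \<xi> p M] by simp
  have B_m: "B y \<in> borel_measurable (Fsig M \<xi> 0 s)" for y
    unfolding B_def N_def by measurable
  have EB: "integrable M (B y) \<and> (\<integral>\<omega>. B y \<omega> \<partial>M) = Gfun \<beta> g \<epsilon> s y" for y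
  proof -
    have fin: "finite (paths 0 s y)" by (rule finite_paths) simp
    have iN: "integrable M (N y)"
      unfolding N_def using exp_path[OF iid lip] by (intro Bochner_Integration.integrable_sum Bochner_Integration.integrable_mult_right) auto
    have "(\<integral>\<omega>. N y \<omega> \<partial>M) = (\<Sum>p\<in>paths 0 s y. c p * m ^ s)"
      unfolding N_def m_def using exp_path[OF iid lip] 
      by (subst Bochner_Integration.integral_sum) (auto intro: Bochner_Integration.integrable_mult_right)
    also have "\<dots> = (\<Sum>p\<in>paths 0 s y. c p) * m ^ s" by (simp add: sum_distrib_right)
    also have "(\<Sum>p\<in>paths 0 s y. c p) = (\<Sum>w\<in>walks0 s. exp (\<beta> * g (\<epsilon> *\<^sub>R rvec (w s + y))))"
      unfolding c_def by (rule sum_paths_start)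
    finally have "(\<integral>\<omega>. N y \<omega> \<partial>M) = (\<Sum>w\<in>walks0 s. exp (\<beta> * g (\<epsilon> *\<^sub>R rvec (w s + y)))) * m ^ s" .
    then have "(\<integral>\<omega>. B y \<omega> \<partial>M) = Gfun \<beta> g \<epsilon> s y"
      unfolding B_def Gfun_def K_def using m0 by simp
    moreover have "integrable M (B y)" unfolding B_def using iN by simp
    ultimately show ?thesis by simp
  qed

  have iw: "integrable M (\<lambda>\<omega>. indicator A \<omega> * w r \<omega>)" if "A \<in> sets (Fsig M \<xi> s t)" "r \<in> P" for A r
  proof (rule integrable_const_bound[where B=1])
    show "AE \<omega> in M. norm (indicator A \<omega> * w r \<omega>) \<le> 1"
      using w01[OF that(2)] by (auto simp: indicator_def)
    have "A \<in> sets M" using that Fsig_sub[OF iid] unfolding subalgebra_def by auto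
    then show "(\<lambda>\<omega>. indicator A \<omega> * w r \<omega>) \<in> borel_measurable M" by measurable
  qed
  have prodA: "integrable M (\<lambda>\<omega>. B (r s) \<omega> * (indicator A \<omega> * w r \<omega>))
     \<and> (\<integral>\<omega>. B (r s) \<omega> * (indicator A \<omega> * w r \<omega>) \<partial>M) = Gfun \<beta> g \<epsilon> s (r s) * (\<integral>\<omega>. indicator A \<omega> * w r \<omega> \<partial>M)"
    if "A \<in> sets (Fsig M \<xi> s t)" "r \<in> P" for A r
  proof -
    have "(\<lambda>\<omega>. indicator A \<omega> * w r \<omega>) \<in> borel_measurable (Fsig M \<xi> s t)" using that(1) by measurable
    from indep_mult[OF iid st' B_m this] EB iw[OF that] show ?thesis by simp
  qed
  have spaceA: "space M \<in> sets (Fsig M \<xi> s t)" using sets.top[of "Fsig M \<xi> s t"] by simp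

  have iW: "integrable M W"
  proof -
    have i1: "integrable M (\<lambda>\<omega>. \<Sum>r\<in>P. B (r s) \<omega> * (indicator (space M) \<omega> * w r \<omega>))"
      using prodA[OF spaceA] by (intro Bochner_Integration.integrable_sum) auto
    have "integrable M (\<lambda>\<omega>. \<Sum>r\<in>P. B (r s) \<omega> * (indicator (space M) \<omega> * w r \<omega>)) = integrable M W"
      by (rule Bochner_Integration.integrable_cong) (auto simp: W_eq mult_ac)
    with i1 show ?thesis by simp
  qed
  have h_m: "h \<in> borel_measurable (Fsig M \<xi> s t)" unfolding h_def by measurable
  have ih: "integrable M h"
  proof -
    have "integrable M (\<lambda>\<omega>. indicator (space M) \<omega> * w r \<omega> * Gfun \<beta> g \<epsilon> s (r s))" if "r \<in> P" for r
      using iw[OF spaceA that] by (rule Bochner_Integration.integrable_mult_left)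
    then have i1: "integrable M (\<lambda>\<omega>. \<Sum>r\<in>P. indicator (space M) \<omega> * w r \<omega> * Gfun \<beta> g \<epsilon> s (r s))"
      by (intro Bochner_Integration.integrable_sum) auto
    have "integrable M (\<lambda>\<omega>. \<Sum>r\<in>P. indicator (space M) \<omega> * w r \<omega> * Gfun \<beta> g \<epsilon> s (r s)) = integrable M h"
      by (rule Bochner_Integration.integrable_cong) (auto simp: h_def)
    with i1 show ?thesis by simp
  qed
  have ch: "AE \<omega> in M. real_cond_exp M (Fsig M \<xi> s t) W \<omega> = h \<omega>"
  proof (rule real_cond_exp_charact)
    fix A assume A: "A \<in> sets (Fsig M \<xi> s t)"
    have "(\<integral>\<omega>\<in>A. W \<omega> \<partial>M) = (\<integral>\<omega>. (\<Sum>r\<in>P. B (r s) \<omega> * (indicator A \<omega> * w r \<omega>)) \<partial>M)"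
      unfolding set_lebesgue_integral_def
      by (intro Bochner_Integration.integral_cong refl) (simp add: W_eq sum_distrib_left mult_ac)
    also have "\<dots> = (\<Sum>r\<in>P. \<integral>\<omega>. B (r s) \<omega> * (indicator A \<omega> * w r \<omega>) \<partial>M)"
      using prodA[OF A] by (intro Bochner_Integration.integral_sum) auto
    also have "\<dots> = (\<Sum>r\<in>P. Gfun \<beta> g \<epsilon> s (r s) * (\<integral>\<omega>. indicator A \<omega> * w r \<omega> \<partial>M))"
      using prodA[OF A] by (intro sum.cong refl) auto
    also have "\<dots> = (\<Sum>r\<in>P. \<integral>\<omega>. indicator A \<omega> * w r \<omega> * Gfun \<beta> g \<epsilon> s (r s) \<partial>M)"
      by (simp add: mult.commute)
    also have "\<dots> = (\<integral>\<omega>. (\<Sum>r\<in>P. indicator A \<omega> * w r \<omega> * Gfun \<beta> g \<epsilon> s (r s)) \<partial>M)"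
      using iw[OF A] by (intro Bochner_Integration.integral_sum[symmetric] Bochner_Integration.integrable_mult_left) auto
    also have "\<dots> = (\<integral>\<omega>\<in>A. h \<omega> \<partial>M)"
      unfolding set_lebesgue_integral_def h_def
      by (intro Bochner_Integration.integral_cong refl) (simp add: sum_distrib_left mult_ac)
    finally show "(\<integral>\<omega>\<in>A. W \<omega> \<partial>M) = (\<integral>\<omega>\<in>A. h \<omega> \<partial>M)" .
  qed (use iW ih h_m in auto)
  have hb: "\<bar>h \<omega> - Gfun \<beta> g \<epsilon> s x\<bar> \<le> Bd" for \<omega>
  proof -
    have "h \<omega> - Gfun \<beta> g \<epsilon> s x = (\<Sum>r\<in>P. w r \<omega> * (Gfun \<beta> g \<epsilon> s (r s) - Gfun \<beta> g \<epsilon> s x))"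
      unfolding h_def using wsum[of \<omega>]
      by (simp add: right_diff_distrib sum_subtractf sum_distrib_right[symmetric])
    also have "\<bar>\<dots>\<bar> \<le> (\<Sum>r\<in>P. \<bar>w r \<omega> * (Gfun \<beta> g \<epsilon> s (r s) - Gfun \<beta> g \<epsilon> s x)\<bar>)"
      by (rule sum_abs)
    also have "\<dots> \<le> (\<Sum>r\<in>P. w r \<omega> * Bd)"
    proof (intro sum_mono)
      fix r assume r: "r \<in> P"
      show "\<bar>w r \<omega> * (Gfun \<beta> g \<epsilon> s (r s) - Gfun \<beta> g \<epsilon> s x)\<bar> \<le> w r \<omega> * Bd"
        using w01[OF r, of \<omega>] bnd[of r] r unfolding P_def
        by (simp add: abs_mult mult_left_mono)
    qed
    also have "\<dots> = Bd" using wsum[of \<omega>] by (simp add: sum_distrib_right[symmetric])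
    finally show ?thesis .
  qed
  show ?thesis using ch hb unfolding W_def by (auto elim!: eventually_mono)
qed

theorem corollary7p3:
  fixes \<beta> :: real and \<phi> :: "real \<Rightarrow> real" and g :: "real^'d \<Rightarrow> real"
  assumes "CARD('d) \<ge> 3"
    and "\<beta> > 0"
    and "\<exists>L. L-lipschitz_on UNIV \<phi>"
    and "\<exists>L. L-lipschitz_on UNIV g"
    and "mu \<phi> \<beta> < 1 / rho TYPE('d)"
  shows "\<exists>C :: real \<Rightarrow> real. mono_on {0..} C \<and> continuous_on {0..} C \<and> (\<forall>r\<ge>0. C r > 0) \<and>
    (\<forall>(M :: 'a measure) (\<xi> :: nat \<Rightarrow> int^'d \<Rightarrow> 'a \<Rightarrow> real). iid_field M \<phi> \<xi> \<longrightarrow>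
      (\<forall>s t (x :: int^'d) \<epsilon>. 1 \<le> s \<and> s < t \<and> 0 < \<epsilon> \<and> \<epsilon> < 1 \<longrightarrow>
        (AE \<omega> in M.
          \<bar>real_cond_exp M (Fsig M \<xi> s t) (Wfun \<phi> \<beta> g \<epsilon> \<xi> s t x) \<omega> - Gfun \<beta> g \<epsilon> s x\<bar>
          \<le> C (\<epsilon> * norm (rvec x) + \<epsilon> * real (t - s) + \<epsilon> * sqrt (real t) + \<epsilon>\<^sup>2 * real t)
             * \<epsilon> * real (t - s))))"
proof -
  obtain L\<phi> where lip\<phi>: "L\<phi>-lipschitz_on UNIV \<phi>" using assms(3) by blast
  obtain L0 where lip0: "L0-lipschitz_on UNIV g" using assms(4) by blast
  define L where "L = L0 + 1"
  have L0: "0 \<le> L0" using lipschitz_on_nonneg[OF lip0] .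
  have Lpos: "L > 0" unfolding L_def using L0 by simp
  have lip: "L-lipschitz_on UNIV g" unfolding L_def by (rule lipschitz_on_le[OF lip0]) simp
  define d where "d = real CARD('d)"
  have dpos: "d > 0" unfolding d_def by simp
  define A where "A = \<beta> * L * exp (\<beta> * \<bar>g 0\<bar>) * (2 * d)"
  define E where "E = \<beta> * L + (d * (\<beta> * L))\<^sup>2 / 2"
  have Apos: "A > 0" unfolding A_def using assms(2) Lpos dpos by simp
  have E0: "E \<ge> 0" unfolding E_def using assms(2) Lpos by simp
  define C where "C r = A * exp (E * r)" for r
  have mono: "mono_on {0..} C"
    by (rule mono_onI) (use Apos E0 in \<open>auto simp: C_def intro!: mult_left_mono\<close>)
  have cont: "continuous_on {0..} C" unfolding C_def by (intro continuous_intros)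
  have pos: "\<forall>r\<ge>0. C r > 0" unfolding C_def using Apos by simp
  have main: "AE \<omega> in M.
          \<bar>real_cond_exp M (Fsig M \<xi> s t) (Wfun \<phi> \<beta> g \<epsilon> \<xi> s t x) \<omega> - Gfun \<beta> g \<epsilon> s x\<bar>
          \<le> C (\<epsilon> * norm (rvec x) + \<epsilon> * real (t - s) + \<epsilon> * sqrt (real t) + \<epsilon>\<^sup>2 * real t)
             * \<epsilon> * real (t - s)"
    if iid: "iid_field M \<phi> \<xi>" and cond: "1 \<le> s \<and> s < t \<and> 0 < \<epsilon> \<and> \<epsilon> < 1"
    for M :: "'a measure" and \<xi> :: "nat \<Rightarrow> int^'d \<Rightarrow> 'a \<Rightarrow> real" and s t x \<epsilon>
  proof (rule main_prob[OF iid lip\<phi>])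
    show "s < t" using cond by simp
    fix r assume r: "r \<in> paths s t x"
    define D where "D = real (t - s)"
    define \<Sigma> where "\<Sigma> = \<epsilon> * norm (rvec x) + \<epsilon> * real (t - s) + \<epsilon> * sqrt (real t) + \<epsilon>\<^sup>2 * real t"
    have st: "s \<le> t" using cond by simp
    have eps: "0 \<le> \<epsilon>" using cond by simp
    have dist: "norm (rvec (r s) - rvec x) \<le> D" unfolding D_def by (rule paths_dist[OF st r])
    have D0: "0 \<le> D" unfolding D_def by simp
    have G: "\<bar>Gfun \<beta> g \<epsilon> s (r s) - Gfun \<beta> g \<epsilon> s x\<bar>
       \<le> (\<beta> * L * exp (\<beta> * \<bar>g 0\<bar>) * exp (\<beta> * L * \<epsilon> * (norm (rvec x) + D)) * \<epsilon> * D)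
          * (2 * d * exp ((d * (\<beta> * L * \<epsilon>))\<^sup>2 * real s / 2))"
      unfolding d_def using G_diff[OF lip _ eps dist] assms(2) by simp
    have s1: "\<epsilon> * (norm (rvec x) + D) \<le> \<Sigma>"
      unfolding \<Sigma>_def D_def using eps by (simp add: distrib_left)
    have s2: "\<epsilon>\<^sup>2 * real s \<le> \<Sigma>"
    proof -
      have "\<epsilon>\<^sup>2 * real s \<le> \<epsilon>\<^sup>2 * real t" using st by (intro mult_left_mono) auto
      moreover have "0 \<le> \<epsilon> * norm (rvec x)" "0 \<le> \<epsilon> * real (t - s)" "0 \<le> \<epsilon> * sqrt (real t)" using eps by auto
      ultimately show ?thesis unfolding \<Sigma>_def by linarith
    qed
    have ex: "\<beta> * L * \<epsilon> * (norm (rvec x) + D) + (d * (\<beta> * L * \<epsilon>))\<^sup>2 * real s / 2 \<le> E * \<Sigma>"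
    proof -
      have "\<beta> * L * (\<epsilon> * (norm (rvec x) + D)) \<le> \<beta> * L * \<Sigma>"
        using s1 assms(2) Lpos by (intro mult_left_mono) auto
      moreover have "(d * (\<beta> * L))\<^sup>2 / 2 * (\<epsilon>\<^sup>2 * real s) \<le> (d * (\<beta> * L))\<^sup>2 / 2 * \<Sigma>"
        using s2 by (intro mult_left_mono) auto
      moreover have "(d * (\<beta> * L * \<epsilon>))\<^sup>2 * real s / 2 = (d * (\<beta> * L))\<^sup>2 / 2 * (\<epsilon>\<^sup>2 * real s)"
        by (simp add: power_mult_distrib)
      ultimately show ?thesis unfolding E_def by (simp add: algebra_simps)
    qed
    have "(\<beta> * L * exp (\<beta> * \<bar>g 0\<bar>) * exp (\<beta> * L * \<epsilon> * (norm (rvec x) + D)) * \<epsilon> * D)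
          * (2 * d * exp ((d * (\<beta> * L * \<epsilon>))\<^sup>2 * real s / 2))
        = A * exp (\<beta> * L * \<epsilon> * (norm (rvec x) + D) + (d * (\<beta> * L * \<epsilon>))\<^sup>2 * real s / 2) * \<epsilon> * D"
      unfolding A_def by (simp add: exp_add mult_ac)
    also have "\<dots> \<le> A * exp (E * \<Sigma>) * \<epsilon> * D"
      using ex Apos eps D0 by (intro mult_right_mono mult_left_mono) auto
    finally show "\<bar>Gfun \<beta> g \<epsilon> s (r s) - Gfun \<beta> g \<epsilon> s x\<bar>
       \<le> C (\<epsilon> * norm (rvec x) + \<epsilon> * real (t - s) + \<epsilon> * sqrt (real t) + \<epsilon>\<^sup>2 * real t) * \<epsilon> * real (t - s)"
      using G unfolding C_def \<Sigma>_def D_def by simp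
  qed
  show ?thesis
    by (rule exI[of _ C]) (use mono cont pos main in blast)
qed

end
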